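(* There exist a tree $\Gamma$ as described, coefficients $\lambda_x>0$, $\beta_x\in\mathbb R$ ($x\in\Gamma$), and a real number $t$ such that the only function $v:\Gamma\to\mathbb C$ satisfying $(Jv)(x)=tv(x)$ for all $x\in\Gamma$ is $v\equiv0$.
   Context: A tree $\Gamma$ "as described" is an infinite connected tree whose vertices are arranged in levels $\ell(x)\in\{0,1,2,\dots\}$: every vertex $x$ is adjacent to exactly one vertex $x'$ with $\ell(x')=\ell(x)+1$; for $\ell(x)\ge 1$ the set $N_x=\{y:\ y'=x\}$ of neighbours of $x$ on level $\ell(x)-1$ is finite and nonempty; $N_x=\emptyset$ if $\ell(x)=0$; there are no other edges. Given $\lambda_x>0$, $\beta_x\in\mathbb R$, the Jacobi matrix $J$ acts on functions $v:\Gamma\to\mathbb C$ by $(Jv)(x)=\lambda_x v(x')+\beta_x v(x)+\sum_{y\in N_x}\lambda_y v(y)$. *)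

theory Defs
  imports Complex_Main
begin

text \<open>A tree as described, with vertex set UNIV :: nat (any such tree is countably
infinite, since it is infinite, connected and locally finite). lev gives the level,
par x is the unique neighbour x' on the next level.\<close>

definition children :: "(nat \<Rightarrow> nat) \<Rightarrow> nat \<Rightarrow> nat set" where
  "children par x = {y. par y = x}"

definition tree_edges :: "(nat \<Rightarrow> nat) \<Rightarrow> (nat \<times> nat) set" where
  "tree_edges par = {(x, par x) | x. True} \<union> {(par x, x) | x. True}"

definition tree_as_described :: "(nat \<Rightarrow> nat) \<Rightarrow> (nat \<Rightarrow> nat) \<Rightarrow> bool" where
  "tree_as_described lev par \<longleftrightarrow>
     (\<forall>x. lev (par x) = lev x + 1) \<and>
     (\<forall>x. lev x \<ge> 1 \<longrightarrow> finite (children par x) \<and> children par x \<noteq> {}) \<and>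
     (\<forall>x. lev x = 0 \<longrightarrow> children par x = {}) \<and>
     (\<forall>x y. (x, y) \<in> (tree_edges par)\<^sup>*)"

definition jacobi :: "(nat \<Rightarrow> nat) \<Rightarrow> (nat \<Rightarrow> real) \<Rightarrow> (nat \<Rightarrow> real) \<Rightarrow> (nat \<Rightarrow> complex) \<Rightarrow> nat \<Rightarrow> complex" where
  "jacobi par lam beta v x =
     of_real (lam x) * v (par x) + of_real (beta x) * v x
     + (\<Sum>y\<in>children par x. of_real (lam y) * v y)"

end

theory Submission
  imports Defs "HOL-Library.Nat_Bijection"
begin

definition Pv :: "nat \<Rightarrow> nat \<Rightarrow> nat" where
  "Pv a b = Suc (2 * prod_encode (a, b))"

definition mypar :: "nat \<Rightarrow> nat" where
  "mypar n = (if even n then n + 2 else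
     (case prod_decode (n div 2) of (a, b) \<Rightarrow> if a = 0 then 2 * (b + 1) else Pv (a - 1) (b + 1)))"

definition mylev :: "nat \<Rightarrow> nat" where
  "mylev n = (if even n then n div 2 else snd (prod_decode (n div 2)))"

definition mybeta :: "nat \<Rightarrow> real" where
  "mybeta n = (if n = 0 then 1 else if even n then 0 else
     (case prod_decode (n div 2) of (a, b) \<Rightarrow> if a = 0 then - (real b / real (b + 1)) else -2))"

lemma Pv_odd: "odd (Pv a b)" by (simp add: Pv_def)
lemma Pv_div: "Pv a b div 2 = prod_encode (a, b)" by (simp add: Pv_def)
lemma Pv_inj: "Pv a b = Pv c d \<longleftrightarrow> a = c \<and> b = d"
  by (auto simp: Pv_def dest: inj_prod_encode[THEN injD])

lemma nat_cases_tree: obtains k where "n = 2 * k" | a b where "n = Pv a b"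
proof (cases "even n")
  case True then show ?thesis using that(1) by (metis evenE)
next
  case False
  obtain a b where ab: "prod_decode (n div 2) = (a, b)" by (cases "prod_decode (n div 2)")
  have "prod_encode (a, b) = n div 2" using ab by (metis prod_decode_inverse)
  then have "n = Pv a b" using False by (simp add: Pv_def)
  then show ?thesis using that(2) by blast
qed

lemma par_S: "mypar (2 * k) = 2 * (k + 1)" by (simp add: mypar_def)
lemma par_P: "mypar (Pv a b) = (if a = 0 then 2 * (b + 1) else Pv (a - 1) (b + 1))"
  using Pv_odd[of a b] by (simp add: mypar_def Pv_div)
lemma lev_S: "mylev (2 * k) = k" by (simp add: mylev_def)
lemma lev_SS: "mylev (Suc (Suc (2 * k))) = Suc k" by (simp add: mylev_def)
lemma lev_P: "mylev (Pv a b) = b"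
  using Pv_odd[of a b] by (simp add: mylev_def Pv_div)
lemma beta_S: "mybeta (2 * k) = (if k = 0 then 1 else 0)" by (simp add: mybeta_def)
lemma beta_P: "mybeta (Pv a b) = (if a = 0 then - (real b / real (b + 1)) else -2)"
  using Pv_odd[of a b] by (simp add: mybeta_def Pv_div) (simp add: Pv_def)

lemma Pv_ne_S: "Pv a b \<noteq> 2 * k" using Pv_odd[of a b] by auto
lemma Pv_ne_SS: "Suc (Suc (2 * k)) \<noteq> Pv a b" using Pv_ne_S[of a b "Suc k"] by simp

lemma children_S: "children mypar (2 * k) = (if k = 0 then {} else {2 * (k - 1), Pv 0 (k - 1)})"
proof -
  have "y \<in> children mypar (2 * k) \<longleftrightarrow> (k \<noteq> 0 \<and> (y = 2 * (k - 1) \<or> y = Pv 0 (k - 1)))" for y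
  proof (cases y rule: nat_cases_tree)
    case (1 j) then show ?thesis by (auto simp: children_def par_S Pv_ne_S[symmetric] dest: sym[of "Pv _ _"])
  next
    case (2 a b) then show ?thesis
      by (auto simp: children_def par_P Pv_ne_S Pv_inj dest: sym[of "Pv _ _"])
  qed
  then show ?thesis by auto
qed

lemma children_0: "children mypar 0 = {}" using children_S[of 0] by simp

lemma children_P: "children mypar (Pv a b) = (if b = 0 then {} else {Pv (a + 1) (b - 1)})"
proof -
  have "y \<in> children mypar (Pv a b) \<longleftrightarrow> (b \<noteq> 0 \<and> y = Pv (a + 1) (b - 1))" for y
  proof (cases y rule: nat_cases_tree)
    case (1 j) then show ?thesis by (auto simp: children_def par_S Pv_ne_SS dest: sym[of "Pv _ _"]) (metis Pv_ne_S)
  next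
    case (2 c d) then show ?thesis
      by (auto simp: children_def par_P Pv_ne_S Pv_ne_SS Pv_inj dest: sym[of "Pv _ _"])
  qed
  then show ?thesis by auto
qed

lemma edge_sym: "(x, y) \<in> tree_edges p \<Longrightarrow> (y, x) \<in> tree_edges p"
  by (auto simp: tree_edges_def)

lemma edge_up: "(x, p x) \<in> tree_edges p" by (auto simp: tree_edges_def)
lemma edge_down: "(p x, x) \<in> tree_edges p" by (auto simp: tree_edges_def)

lemma conn_S: "(2 * k, 0) \<in> (tree_edges mypar)\<^sup>*"
proof (induction k)
  case 0 then show ?case by simp
next
  case (Suc k)
  have "(2 * Suc k, 2 * k) \<in> tree_edges mypar"
    using edge_down[of mypar "2 * k"] by (simp add: par_S)
  then show ?case using Suc by (meson converse_rtrancl_into_rtrancl)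
qed

lemma conn_P: "(Pv a b, 2 * (a + b + 1)) \<in> (tree_edges mypar)\<^sup>*"
proof (induction a arbitrary: b)
  case 0 then show ?case using edge_up[of "Pv 0 b" mypar] by (simp add: par_P)
next
  case (Suc a)
  have "(Pv (Suc a) b, Pv a (b + 1)) \<in> tree_edges mypar"
    using edge_up[of "Pv (Suc a) b" mypar] by (simp add: par_P)
  then show ?case using Suc[of "b + 1"] by (simp add: converse_rtrancl_into_rtrancl)
qed

lemma conn0: "(x, 0) \<in> (tree_edges mypar)\<^sup>*"
proof (cases x rule: nat_cases_tree)
  case (1 k) then show ?thesis using conn_S by simp
next
  case (2 a b) then show ?thesis using conn_P[of a b] conn_S[of "a + b + 1"] by simp
qed

lemma tree_ok: "tree_as_described mylev mypar"
proof -
  have s: "sym (tree_edges mypar)" by (auto simp: sym_def tree_edges_def)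
  have c: "(x, y) \<in> (tree_edges mypar)\<^sup>*" for x y
  proof -
    have "(0, y) \<in> (tree_edges mypar)\<^sup>*"
      using conn0[of y] sym_rtrancl[OF s] by (auto simp: sym_def)
    then show ?thesis using conn0[of x] by simp
  qed
  have l: "mylev (mypar x) = mylev x + 1" for x
    by (cases x rule: nat_cases_tree) (auto simp: par_S par_P lev_S lev_P lev_SS)
  have f: "mylev x \<ge> 1 \<longrightarrow> finite (children mypar x) \<and> children mypar x \<noteq> {}" for x
    by (cases x rule: nat_cases_tree) (auto simp: children_S children_P lev_S lev_P)
  have z: "mylev x = 0 \<longrightarrow> children mypar x = {}" for x
    by (cases x rule: nat_cases_tree) (auto simp: children_S children_P lev_S lev_P children_0)
  show ?thesis unfolding tree_as_described_def using c l f z by blast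
qed

lemma lin_aux: "(V::complex) - 2*Y + X = 0 \<Longrightarrow> V + X = 2*Y"
  by (metis add.commute add_diff_eq diff_eq_eq add_0)

lemma jac: "jacobi mypar (\<lambda>_. 1) mybeta v x =
   v (mypar x) + of_real (mybeta x) * v x + (\<Sum>y\<in>children mypar x. v y)"
  by (simp add: jacobi_def)

lemma kernel_trivial:
  assumes h: "\<forall>x. jacobi mypar (\<lambda>_. 1) mybeta v x = of_real 0 * v x"
  shows "v = (\<lambda>_. 0)"
proof -
  have E: "v (mypar x) + of_real (mybeta x) * v x + (\<Sum>y\<in>children mypar x. v y) = 0" for x
    using h jac by simp
  have eqP: "v (mypar (Pv a b)) + of_real (mybeta (Pv a b)) * v (Pv a b)
      + (if b = 0 then 0 else v (Pv (a + 1) (b - 1))) = 0" for a b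
    using E[of "Pv a b"] by (simp add: children_P split: if_splits)
  have eqS: "v (2 * (k + 1)) + of_real (mybeta (2 * k)) * v (2 * k)
      + (if k = 0 then 0 else v (2 * (k - 1)) + v (Pv 0 (k - 1))) = 0" for k
  proof -
    have "2 * (k - 1) \<noteq> Pv 0 (k - 1)" using Pv_ne_S by metis
    then show ?thesis using E[of "2 * k"] proof (cases "k = 0")
      case True
      have "mypar 0 = 2" by (simp add: mypar_def)
      then show ?thesis using E[of 0] True by (simp add: children_0)
    qed (simp add: children_S par_S)
  qed
  have C1: "v (Pv a b) = of_nat (b + 1) * v (Pv (a + b) 0)" for a b
  proof (induction b arbitrary: a rule: less_induct)
    case (less n)
    show ?case
    proof (cases n)
      case 0 then show ?thesis by simp
    next
      case (Suc b)
      have e: "v (Pv a (Suc b)) - 2 * v (Pv (a + 1) b)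
        + (if b = 0 then 0 else v (Pv (a + 1 + 1) (b - 1))) = 0"
        using eqP[of "a + 1" b] by (simp add: par_P beta_P)
      have i1: "v (Pv (a + 1) b) = of_nat (b + 1) * v (Pv (a + Suc b) 0)"
        using less[of b "a + 1"] Suc by simp
      show ?thesis
      proof (cases b)
        case 0
        then show ?thesis using e i1 \<open>n = Suc b\<close> by (simp add: algebra_simps)
      next
        case (Suc c)
        have i2: "v (Pv (a + 1 + 1) (b - 1)) = of_nat b * v (Pv (a + Suc b) 0)"
          using less[of c "a + 1 + 1"] Suc \<open>n = Suc b\<close> by simp
        have "v (Pv a (Suc b)) = 2 * (of_nat (b + 1) * v (Pv (a + Suc b) 0)) - of_nat b * v (Pv (a + Suc b) 0)"
          using e i1 i2 Suc by (simp add: eq_diff_eq) (erule lin_aux)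
        then show ?thesis using \<open>n = Suc b\<close> by (simp add: algebra_simps)
      qed
    qed
  qed
  have C2: "v (2 * (b + 1)) = 0" for b
  proof -
    have pb: "mypar (Pv 0 b) = 2 * (b + 1)" "mybeta (Pv 0 b) = - (real b / real (b + 1))"
      by (simp_all add: par_P beta_P)
    have e: "v (2 * (b + 1)) + of_real (- (real b / real (b + 1))) * v (Pv 0 b)
      + (if b = 0 then 0 else v (Pv (0 + 1) (b - 1))) = 0"
      using eqP[of 0 b] unfolding pb .
    have i1: "v (Pv 0 b) = of_nat (b + 1) * v (Pv b 0)" using C1[of 0 b] by simp
    have i2: "b > 0 \<Longrightarrow> v (Pv (0 + 1) (b - 1)) = of_nat b * v (Pv b 0)" using C1[of 1 "b - 1"] by simp
    have q: "of_real (- (real b / real (b + 1))) * (of_nat (b + 1) * w) = - (of_nat b * (w::complex))" for w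
    proof -
      have "of_real (- (real b / real (b + 1))) * (of_nat (b + 1) :: complex) = of_real (- (real b / real (b + 1) * real (b + 1)))"
        by (simp only: of_real_mult of_real_of_nat_eq mult_minus_left of_real_minus)
      also have "\<dots> = - of_nat b"
      proof -
        have "real b / real (b + 1) * real (b + 1) = real b" by simp
        then show ?thesis by simp
      qed
      finally show ?thesis by (simp add: mult.assoc[symmetric])
    qed
    show ?thesis
    proof (cases "b = 0")
      case True then show ?thesis using e by simp
    next
      case False
      then have "v (2 * (b + 1)) + - (of_nat b * v (Pv b 0)) + of_nat b * v (Pv b 0) = 0"
        using e i1 i2 q[of "v (Pv b 0)"] by simp
      then show ?thesis by simp
    qed
  qed
  have C3: "v 0 = 0" using eqS[of 0] C2[of 0] beta_S[of 0] by simp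
  have CS: "v (2 * k) = 0" for k
    using C2[of "k - 1"] C3 by (cases k) auto
  have C4: "v (Pv 0 b) = 0" for b
    using eqS[of "b + 1"] CS[of "b + 2"] CS[of "b + 1"] CS[of b] by (simp add: beta_S)
  have C5: "v (Pv n 0) = 0" for n
    proof -
    have "(1 + complex_of_nat n) \<noteq> 0"
      by (metis of_nat_Suc of_nat_eq_0_iff Suc_neq_Zero add.commute)
    then show ?thesis using C4[of n] C1[of 0 n] by simp
  qed
  have "v x = 0" for x
  proof (cases x rule: nat_cases_tree)
    case (1 k) then show ?thesis using CS by simp
  next
    case (2 a b) then show ?thesis using C1[of a b] C5 by simp
  qed
  then show ?thesis by auto
qed

theorem proposition5:
  shows "\<exists>(lev :: nat \<Rightarrow> nat) (par :: nat \<Rightarrow> nat) (lam :: nat \<Rightarrow> real) (beta :: nat \<Rightarrow> real) (t :: real).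
           tree_as_described lev par \<and> (\<forall>x. lam x > 0) \<and>
           (\<forall>v :: nat \<Rightarrow> complex.
              (\<forall>x. jacobi par lam beta v x = of_real t * v x) \<longrightarrow> v = (\<lambda>_. 0))"
  using tree_ok kernel_trivial by (intro exI[of _ mylev] exI[of _ mypar] exI[of _ "\<lambda>_. 1"] exI[of _ mybeta] exI[of _ 0]) auto

end
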